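(* Let $V\in\mathbb{C}$ and let $A(V,0,\pi)$ be the operator in $L_2(0,1)$ acting by $A(V,0,\pi)\psi=i\psi'+V\big[\psi(0)-\tfrac{i}{2}\langle\psi,V\rangle\big]$ on the domain of $\psi\in W_2^1(0,1)$ with $\psi(1)=-[\psi(0)-i\langle\psi,V\rangle]$, where $\langle\psi,V\rangle=\overline{V}\int_0^1\psi(x)\,dx$ (the potential is the constant function $V$). Then $\lambda=0$ is an eigenvalue of $A(V,0,\pi)$ if and only if $V=2i$. In this case $\lambda=0$ has multiplicity $2$, and the corresponding orthogonal eigenfunctions are $\psi_1(x)=1$ and $\psi_2(x)=x-\tfrac12$.
   Context: $\langle f,g\rangle=\int_0^1 f\bar g\,dx$; $W_2^1(0,1)$ is the Sobolev space. *)

theory Defs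
  imports "HOL-Analysis.Analysis"
begin

text \<open>Functions on [0,1] are modelled as real => complex; only values on [0,1] matter.
  phi is a weak (L2) derivative of psi: phi is measurable, square integrable on [0,1],
  and psi(x) = psi(0) + integral of phi over [0,x] for all x in [0,1]
  (psi is then the continuous representative of a W_2^1(0,1) function).\<close>
definition is_wderiv :: "(real \<Rightarrow> complex) \<Rightarrow> (real \<Rightarrow> complex) \<Rightarrow> bool" where
  "is_wderiv psi phi \<longleftrightarrow>
     phi \<in> borel_measurable lborel \<and>
     set_integrable lborel {0..1} (\<lambda>x. (cmod (phi x))\<^sup>2) \<and>
     (\<forall>x\<in>{0..1}. psi x = psi 0 + (LINT t:{0..x}|lborel. phi t))"

definition W21 :: "(real \<Rightarrow> complex) \<Rightarrow> bool" where
  "W21 psi \<longleftrightarrow> (\<exists>phi. is_wderiv psi phi)"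

definition L2ip :: "(real \<Rightarrow> complex) \<Rightarrow> (real \<Rightarrow> complex) \<Rightarrow> complex" where
  "L2ip f g = (LINT x:{0..1}|lborel. f x * cnj (g x))"

definition ipV :: "(real \<Rightarrow> complex) \<Rightarrow> complex \<Rightarrow> complex" where
  "ipV psi V = L2ip psi (\<lambda>_. V)"

definition Adom :: "complex \<Rightarrow> (real \<Rightarrow> complex) \<Rightarrow> bool" where
  "Adom V psi \<longleftrightarrow> W21 psi \<and> psi 1 = - (psi 0 - \<i> * ipV psi V)"

text \<open>Aop V psi f: psi is in the domain and A(V,0,pi) psi = f as elements of L2(0,1),
  i.e. almost everywhere on [0,1].\<close>
definition Aop :: "complex \<Rightarrow> (real \<Rightarrow> complex) \<Rightarrow> (real \<Rightarrow> complex) \<Rightarrow> bool" where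
  "Aop V psi f \<longleftrightarrow> Adom V psi \<and>
     (\<exists>phi. is_wderiv psi phi \<and>
        (AE x in lborel. x \<in> {0..1} \<longrightarrow>
           \<i> * phi x + V * (psi 0 - (\<i> / 2) * ipV psi V) = f x))"

definition L2zero :: "(real \<Rightarrow> complex) \<Rightarrow> bool" where
  "L2zero f \<longleftrightarrow> (AE x in lborel. x \<in> {0..1} \<longrightarrow> f x = 0)"

definition is_eigenvalue :: "complex \<Rightarrow> complex \<Rightarrow> bool" where
  "is_eigenvalue V lam \<longleftrightarrow> (\<exists>psi. \<not> L2zero psi \<and> Aop V psi (\<lambda>x. lam * psi x))"

end

theory Submission
  imports Defs
begin

lemma int_poly:
  fixes p q r :: complex and x :: real
  assumes "0 \<le> x"
  shows "(LINT t:{0..x}|lborel. p + q * complex_of_real t + r * (complex_of_real t)^2)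
     = p * x + q * x^2/2 + r * x^3/3"
proof -
  define F where "F = (\<lambda>t::real. p * t + q * (complex_of_real t)^2/2 + r * (complex_of_real t)^3/3)"
  have "(LBINT t=ereal 0..ereal x. p + q * complex_of_real t + r * (complex_of_real t)^2)
     = F x - F 0"
    apply (rule interval_integral_FTC_finite)
     apply (intro continuous_intros)
    unfolding has_vector_derivative_def F_def
    apply (auto intro!: derivative_eq_intros simp: field_simps power2_eq_square)
    apply (rule ext) by (simp add: scaleR_conv_of_real field_simps)
  then show ?thesis unfolding interval_integral_Icc[OF assms] by (simp add: F_def)
qed

lemma wderiv_ae:
  assumes "is_wderiv psi phi" "AE x in lborel. x \<in> {0..1} \<longrightarrow> phi x = g x"
    "g \<in> borel_measurable lborel"
  shows "\<forall>x\<in>{0..1}. psi x = psi 0 + (LINT t:{0..x}|lborel. g t)"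
proof
  fix x :: real assume x: "x \<in> {0..1}"
  have m: "phi \<in> borel_measurable lborel" using assms(1) unfolding is_wderiv_def by blast
  have "(LINT t:{0..x}|lborel. phi t) = (LINT t:{0..x}|lborel. g t)"
  proof (rule set_lebesgue_integral_cong_AE)
    show "AE t\<in>{0..x} in lborel. phi t = g t"
      using assms(2) proof eventually_elim
      case (elim t)
      then show ?case using x by simp
    qed
  qed (use m assms(3) in auto)
  moreover have "psi x = psi 0 + (LINT t:{0..x}|lborel. phi t)"
    using assms(1) x unfolding is_wderiv_def by blast
  ultimately show "psi x = psi 0 + (LINT t:{0..x}|lborel. g t)" by simp
qed

lemma ipV_poly:
  assumes "\<forall>x\<in>{0..1}. psi x = p + q * complex_of_real x + r * (complex_of_real x)^2"
  shows "ipV psi V = cnj V * (p + q/2 + r/3)"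
proof -
  have "ipV psi V = (LINT t:{0..1}|lborel. p * cnj V + (q * cnj V) * complex_of_real t
      + (r * cnj V) * (complex_of_real t)^2)"
    unfolding ipV_def L2ip_def
    apply (rule set_lebesgue_integral_cong) using assms by (auto simp: algebra_simps)
  also have "\<dots> = cnj V * (p + q/2 + r/3)"
    by (subst int_poly) (auto simp: algebra_simps)
  finally show ?thesis .
qed

lemma Aop_lin:
  assumes "Aop V psi f" "\<forall>x\<in>{0..1}. f x = a + c * complex_of_real x"
    and K: "K = V * (psi 0 - (\<i> / 2) * ipV psi V)"
  shows "(\<forall>x\<in>{0..1}. psi x = psi 0 + (- \<i> * (a - K)) * complex_of_real x + (- \<i> * c / 2) * (complex_of_real x)^2)
     \<and> ipV psi V = cnj V * (psi 0 + (- \<i> * (a - K))/2 + (- \<i> * c / 2)/3)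
     \<and> psi 1 = - (psi 0 - \<i> * ipV psi V)"
proof -
  obtain phi where w: "is_wderiv psi phi" and ae: "AE x in lborel. x \<in> {0..1} \<longrightarrow>
           \<i> * phi x + V * (psi 0 - (\<i> / 2) * ipV psi V) = f x"
    and b: "psi 1 = - (psi 0 - \<i> * ipV psi V)"
    using assms(1) unfolding Aop_def Adom_def by blast
  define g where "g = (\<lambda>t::real. (- \<i> * (a - K)) + (- \<i> * c) * complex_of_real t + 0 * (complex_of_real t)^2)"
  have ae2: "AE x in lborel. x \<in> {0..1} \<longrightarrow> phi x = g x"
    using ae proof eventually_elim
    case (elim x)
    show ?case
    proof
      assume x: "x \<in> {0..1}"
      then have "\<i> * phi x + K = a + c * complex_of_real x" using elim assms(2) K by simp
      then have e: "\<i> * phi x = a + c * complex_of_real x - K" by (simp add: eq_diff_eq)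
      have "phi x = - \<i> * (\<i> * phi x)" by (simp add: mult.assoc[symmetric])
      then have "phi x = - \<i> * (a + c * complex_of_real x - K)" using e by simp
      then show "phi x = g x" unfolding g_def by (simp add: algebra_simps)
    qed
  qed
  have gm: "g \<in> borel_measurable lborel" unfolding g_def by measurable
  have p: "\<forall>x\<in>{0..1}. psi x = psi 0 + (- \<i> * (a - K)) * complex_of_real x + (- \<i> * c / 2) * (complex_of_real x)^2"
  proof
    fix x :: real assume x: "x \<in> {0..1}"
    have "psi x = psi 0 + (LINT t:{0..x}|lborel. g t)" using wderiv_ae[OF w ae2 gm] x by blast
    also have "(LINT t:{0..x}|lborel. g t) = (- \<i> * (a - K)) * complex_of_real x + (- \<i> * c / 2) * (complex_of_real x)^2"
      unfolding g_def using x by (subst int_poly) (auto simp: power2_eq_square)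
    finally show "psi x = psi 0 + (- \<i> * (a - K)) * complex_of_real x + (- \<i> * c / 2) * (complex_of_real x)^2"
      by simp
  qed
  show ?thesis using p b ipV_poly[OF p] by blast
qed

lemma not_L2zero:
  assumes "\<forall>x\<in>{0<..<1/2}. f x \<noteq> 0"
  shows "\<not> L2zero f"
proof
  assume "L2zero f"
  then have "AE x in lborel. x \<in> {0..1} \<longrightarrow> f x = 0" unfolding L2zero_def .
  then have "AE x in lborel. x \<notin> {0<..<1/2::real}"
    apply eventually_elim using assms by auto
  then have "emeasure lborel {0<..<1/2::real} = 0"
    by (subst (asm) AE_iff_measurable[where N="{0<..<1/2}"]) auto
  then show False by simp
qed


lemma kernel_form:
  assumes "Aop V psi (\<lambda>x. 0 * psi x)" and K: "K = V * (psi 0 - (\<i> / 2) * ipV psi V)"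
  shows "(\<forall>x\<in>{0..1}. psi x = psi 0 + (\<i> * K) * complex_of_real x)
     \<and> ipV psi V = cnj V * (psi 0 + \<i> * K / 2)
     \<and> psi 1 = - (psi 0 - \<i> * ipV psi V)"
proof -
  have z: "\<forall>x\<in>{0..1}. (\<lambda>x. 0 * psi x) x = 0 + 0 * complex_of_real x" by simp
  have e1: "- \<i> * (0 - K) = \<i> * K" by simp
  have e2: "- \<i> * 0 / 2 = 0" "\<And>y::complex. y + 0 * complex_of_real y' = y" "(0::complex)/2/3 = 0" "\<And>y::complex. y + 0 = y" for y'
    by simp_all
  show ?thesis using Aop_lin[OF assms(1) z K] unfolding e1 e2 mult_zero_left add_0_right div_0 .
qed

lemma Aop_2i:
  assumes V: "V = 2 * \<i>" and p: "\<forall>x\<in>{0..1}. psi x = a + c * complex_of_real x"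
  shows "Aop V psi (\<lambda>x. 0)"
proof -
  have p0: "psi 0 = a" using p by auto
  have p1: "psi 1 = a + c" using p by auto
  have pp: "\<forall>x\<in>{0..1}. psi x = a + c * complex_of_real x + 0 * (complex_of_real x)^2"
    using p by simp
  have ip: "ipV psi V = - 2 * \<i> * (a + c/2)"
    using ipV_poly[OF pp, of V] V by simp
  have w: "is_wderiv psi (\<lambda>_. c)"
    unfolding is_wderiv_def
  proof (intro conjI ballI)
    show "(\<lambda>_. c) \<in> borel_measurable lborel" by simp
    show "set_integrable lborel {0..1::real} (\<lambda>x. (cmod c)\<^sup>2)"
      using borel_integrable_atLeastAtMost'[of 0 1 "\<lambda>x. (cmod c)\<^sup>2"] by simp
    fix x :: real assume x: "x \<in> {0..1}"
    have "(LINT t:{0..x}|lborel. c) = (LINT t:{0..x}|lborel. c + 0 * complex_of_real t + 0 * (complex_of_real t)^2)"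
      by simp
    also have "\<dots> = c * x" using x by (subst int_poly) auto
    finally show "psi x = psi 0 + (LINT t:{0..x}|lborel. c)" using p x p0 by simp
  qed
  have b: "psi 1 = - (psi 0 - \<i> * ipV psi V)"
    unfolding p0 p1 ip by (simp add: algebra_simps)
  have d: "Adom V psi" unfolding Adom_def W21_def using w b by blast
  have e: "\<i> * c + V * (psi 0 - (\<i> / 2) * ipV psi V) = 0"
    using p0 ip V by (simp add: algebra_simps)
  show ?thesis unfolding Aop_def
  proof (intro conjI exI[of _ "\<lambda>_. c"])
    show "AE x in lborel. x \<in> {0..1} \<longrightarrow> \<i> * c + V * (psi 0 - \<i> / 2 * ipV psi V) = 0"
      by (rule AE_I2) (use e in simp)
  qed (use d w in auto)
qed

lemma alg1:
  fixes P K I V :: complex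
  assumes k: "K = V*(P - \<i>/2*I)" and i: "I = cnj V * (P + \<i>*K/2)" and b: "P + \<i>*K = -(P - \<i>*I)"
    and v: "V \<noteq> 2*\<i>"
  shows "P = 0 \<and> K = 0"
proof -
  define S where "S = P + \<i>*K/2"
  have "2*S = \<i>*I" using b unfolding S_def by (simp add: algebra_simps)
  then have "2*S = \<i>* cnj V * S" using i unfolding S_def[symmetric] by (simp add: algebra_simps)
  then have "S * (2 - \<i> * cnj V) = 0" by (simp add: algebra_simps)
  moreover have "2 - \<i> * cnj V \<noteq> 0"
  proof
    assume "2 - \<i> * cnj V = 0"
    then have "cnj (2 - \<i> * cnj V) = 0" by simp
    then have "2 + \<i> * V = 0" by simp
    then have "\<i> * (2 + \<i> * V) = 0" by simp
    then have "2*\<i> - V = 0" by (simp add: algebra_simps)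
    then show False using v by simp
  qed
  ultimately have S0: "S = 0" by simp
  then have I0: "I = 0" using i S_def by simp
  then have "K = V * P" using k by simp
  moreover have "2*(P + \<i>*K/2) = 0" using S0 S_def by simp
  then have "2*P + \<i>*K = 0" by (simp add: algebra_simps)
  ultimately have "P * (2 + \<i> * V) = 0" by (simp add: algebra_simps)
  moreover have "2 + \<i> * V \<noteq> 0"
  proof
    assume "2 + \<i> * V = 0"
    then have "\<i> * (2 + \<i> * V) = 0" by simp
    then have "2*\<i> - V = 0" by (simp add: algebra_simps)
    then show False using v by simp
  qed
  ultimately have "P = 0" by simp
  then show ?thesis using \<open>K = V * P\<close> by simp
qed

lemma alg2:
  fixes P K I V a c :: complex
  assumes v: "V = 2*\<i>" and k: "K = V*(P - \<i>/2*I)"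
    and i: "I = cnj V * (P + (-\<i>*(a-K))/2 + (-\<i>*c/2)/3)"
    and b: "P + (-\<i>*(a-K)) + (-\<i>*c/2) = -(P - \<i>*I)"
  shows "a = 0 \<and> c = 0"
proof -
  have k2: "K = 2*\<i>*P + I" using k v by (simp add: algebra_simps)
  have cv: "cnj V = -2*\<i>" using v by simp
  have e1: "a + c/3 = 0" using i unfolding cv k2 by (simp add: field_simps) algebra
  have "\<i>*c + \<i>*(a*2) = 0" using b unfolding k2 by (simp add: field_simps)
  then have "\<i>*(c + a*2) = 0" by (simp only: distrib_left)
  then have "c + a*2 = 0" by simp
  then have e2: "a + c/2 = 0" by (simp add: field_simps)
  from e1 e2 have "c = 0" by (simp add: field_simps) algebra
  then show ?thesis using e2 by simp
qed

theorem proposition6p1: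
  fixes V :: complex
  shows "(is_eigenvalue V 0 \<longleftrightarrow> V = 2 * \<i>) \<and>
    (V = 2 * \<i> \<longrightarrow>
      (\<forall>psi. Aop V psi (\<lambda>x. 0 * psi x) \<longleftrightarrow>
          (\<exists>c1 c2. \<forall>x\<in>{0..1}. psi x = c1 * 1 + c2 * (complex_of_real x - 1/2))) \<and>
      (\<forall>psi chi. Aop V psi chi \<and> Aop V chi (\<lambda>x. 0 * chi x) \<longrightarrow> Aop V psi (\<lambda>x. 0 * psi x)) \<and>
      Aop V (\<lambda>x. 1) (\<lambda>x. 0) \<and>
      Aop V (\<lambda>x. complex_of_real x - 1/2) (\<lambda>x. 0) \<and>
      L2ip (\<lambda>x. 1) (\<lambda>x. complex_of_real x - 1/2) = 0 \<and>
      \<not> L2zero (\<lambda>x. 1) \<and> \<not> L2zero (\<lambda>x. complex_of_real x - 1/2))"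
proof -
  have nz1: "\<not> L2zero (\<lambda>x. 1)" by (rule not_L2zero) simp
  have nz2: "\<not> L2zero (\<lambda>x. complex_of_real x - 1/2)"
  proof (rule not_L2zero, intro ballI)
    fix x :: real assume "x \<in> {0<..<1/2}"
    then have "x - 1/2 \<noteq> 0" by simp
    moreover have "complex_of_real x - 1/2 = complex_of_real (x - 1/2)" by simp
    ultimately show "complex_of_real x - 1/2 \<noteq> 0" by (simp only: of_real_eq_0_iff not_False_eq_True)
  qed
  have A: "V = 2 * \<i>" if e: "is_eigenvalue V 0"
  proof (rule ccontr)
    assume v: "V \<noteq> 2 * \<i>"
    obtain psi where nz: "\<not> L2zero psi" and ap: "Aop V psi (\<lambda>x. 0 * psi x)"
      using e unfolding is_eigenvalue_def by auto
    define K where "K = V * (psi 0 - (\<i> / 2) * ipV psi V)"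
    have kf: "(\<forall>x\<in>{0..1}. psi x = psi 0 + (\<i> * K) * complex_of_real x)"
      "ipV psi V = cnj V * (psi 0 + \<i> * K / 2)"
      "psi 1 = - (psi 0 - \<i> * ipV psi V)"
      using kernel_form[OF ap K_def] by blast+
    have "psi 1 = psi 0 + \<i> * K" using bspec[OF kf(1), of 1] by simp
    then have b: "psi 0 + \<i> * K = - (psi 0 - \<i> * ipV psi V)" using kf(3) by simp
    have "psi 0 = 0 \<and> K = 0" using alg1[OF K_def kf(2) b v] .
    then have "\<forall>x\<in>{0..1}. psi x = 0"
    proof (intro ballI)
      fix x :: real assume x: "x \<in> {0..1}" and h: "psi 0 = 0 \<and> K = 0"
      have "psi x = psi 0 + (\<i> * K) * complex_of_real x" using kf(1) x by blast
      then show "psi x = 0" using h by simp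
    qed
    then have "L2zero psi" unfolding L2zero_def by (intro AE_I2) auto
    then show False using nz by contradiction
  qed
  have E: "Aop V (\<lambda>x. 1) (\<lambda>x. 0)" if v: "V = 2 * \<i>"
    using Aop_2i[OF v, of "\<lambda>x. 1" 1 0] by simp
  have F: "Aop V (\<lambda>x. complex_of_real x - 1/2) (\<lambda>x. 0)" if v: "V = 2 * \<i>"
    using Aop_2i[OF v, of "\<lambda>x. complex_of_real x - 1/2" "-1/2" 1] by simp
  have B: "is_eigenvalue V 0" if v: "V = 2 * \<i>"
    unfolding is_eigenvalue_def
    using nz1 E[OF v] by (intro exI[of _ "\<lambda>x. 1"]) simp
  have C: "Aop V psi (\<lambda>x. 0 * psi x) \<longleftrightarrow>
          (\<exists>c1 c2. \<forall>x\<in>{0..1}. psi x = c1 * 1 + c2 * (complex_of_real x - 1/2))"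
    if v: "V = 2 * \<i>" for psi
  proof
    assume ap: "Aop V psi (\<lambda>x. 0 * psi x)"
    define K where "K = V * (psi 0 - (\<i> / 2) * ipV psi V)"
    have kf: "\<forall>x\<in>{0..1}. psi x = psi 0 + (\<i> * K) * complex_of_real x"
      using kernel_form[OF ap K_def] by blast
    show "\<exists>c1 c2. \<forall>x\<in>{0..1}. psi x = c1 * 1 + c2 * (complex_of_real x - 1/2)"
    proof (rule exI[of _ "psi 0 + \<i> * K / 2"], rule exI[of _ "\<i> * K"], intro ballI)
      fix x :: real assume x: "x \<in> {0..1}"
      have "psi x = psi 0 + (\<i> * K) * complex_of_real x" using kf x by blast
      then show "psi x = (psi 0 + \<i> * K / 2) * 1 + \<i> * K * (complex_of_real x - 1 / 2)"
        by (simp add: algebra_simps)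
    qed
  next
    assume "\<exists>c1 c2. \<forall>x\<in>{0..1}. psi x = c1 * 1 + c2 * (complex_of_real x - 1/2)"
    then obtain c1 c2 where c: "\<forall>x\<in>{0..1}. psi x = c1 * 1 + c2 * (complex_of_real x - 1/2)" by blast
    have "\<forall>x\<in>{0..1}. psi x = (c1 - c2/2) + c2 * complex_of_real x"
      using c by (simp add: algebra_simps)
    from Aop_2i[OF v this] show "Aop V psi (\<lambda>x. 0 * psi x)" by simp
  qed
  have D: "Aop V psi (\<lambda>x. 0 * psi x)"
    if v: "V = 2 * \<i>" and ap: "Aop V psi chi" and ac: "Aop V chi (\<lambda>x. 0 * chi x)" for psi chi
  proof -
    define Kc where "Kc = V * (chi 0 - (\<i> / 2) * ipV chi V)"
    have cf: "\<forall>x\<in>{0..1}. chi x = chi 0 + (\<i> * Kc) * complex_of_real x"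
      using kernel_form[OF ac Kc_def] by blast
    define K where "K = V * (psi 0 - (\<i> / 2) * ipV psi V)"
    have pf: "(\<forall>x\<in>{0..1}. psi x = psi 0 + (- \<i> * (chi 0 - K)) * complex_of_real x + (- \<i> * (\<i> * Kc) / 2) * (complex_of_real x)^2)"
       "ipV psi V = cnj V * (psi 0 + (- \<i> * (chi 0 - K))/2 + (- \<i> * (\<i> * Kc) / 2)/3)"
       "psi 1 = - (psi 0 - \<i> * ipV psi V)"
      using Aop_lin[OF ap cf K_def] by blast+
    have "psi 1 = psi 0 + (- \<i> * (chi 0 - K)) + (- \<i> * (\<i> * Kc) / 2)"
      using bspec[OF pf(1), of 1] by simp
    then have b: "psi 0 + (- \<i> * (chi 0 - K)) + (- \<i> * (\<i> * Kc) / 2) = - (psi 0 - \<i> * ipV psi V)"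
      using pf(3) by simp
    have "chi 0 = 0 \<and> \<i> * Kc = 0" using alg2[OF v K_def pf(2) b] .
    then have c0: "\<forall>x\<in>{0..1}. chi x = 0"
    proof (intro ballI)
      fix x :: real assume x: "x \<in> {0..1}" and h: "chi 0 = 0 \<and> \<i> * Kc = 0"
      have "chi x = chi 0 + (\<i> * Kc) * complex_of_real x" using cf x by blast
      then show "chi x = 0" using h by simp
    qed
    obtain phi where d: "Adom V psi" and w: "is_wderiv psi phi" and ae: "AE x in lborel. x \<in> {0..1} \<longrightarrow>
           \<i> * phi x + V * (psi 0 - (\<i> / 2) * ipV psi V) = chi x"
      using ap unfolding Aop_def by blast
    have ae2: "AE x in lborel. x \<in> {0..1} \<longrightarrow>
           \<i> * phi x + V * (psi 0 - (\<i> / 2) * ipV psi V) = 0 * psi x"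
      using ae proof eventually_elim
      case (elim x)
      then show ?case using c0 by simp
    qed
    show ?thesis unfolding Aop_def using d w ae2 by blast
  qed
  have G: "L2ip (\<lambda>x. 1) (\<lambda>x. complex_of_real x - 1/2) = 0"
  proof -
    have "L2ip (\<lambda>x. 1) (\<lambda>x. complex_of_real x - 1/2)
       = (LINT t:{0..1}|lborel. (-1/2) + 1 * complex_of_real t + 0 * (complex_of_real t)^2)"
      unfolding L2ip_def by (rule set_lebesgue_integral_cong) auto
    also have "\<dots> = 0" by (subst int_poly) auto
    finally show ?thesis .
  qed
  show ?thesis
    using A B C D E F G nz1 nz2 by blast
qed

end
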